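(* Let $\alpha$ be an ordinal and let $X$ be a metric space expressed as a union $X=\bigcup_{i\in I}X_i$. Suppose that $\{X_i\}_{i\in I}\in\mathfrak{C}_\alpha$ and that for every $r>0$ there is a subspace $Y(r)\subset X$ with $\{Y(r)\}\in\mathfrak{C}_\alpha$ such that the collection $\{X_i\setminus Y(r)\}_{i\in I}$ is $r$-disjoint. Then $\{X\}\in\mathfrak{C}_{\alpha+1}$.
   Context: A family $\mathcal{U}$ of metric subspaces of a metric space $(X,d)$ is $r$-disjoint if $d(x,y)>r$ whenever $x\in U$, $y\in U'$, $U\neq U'$ in $\mathcal{U}$. For families $\mathcal{X},\mathcal{Y}$ and $R\in\mathbb{R}^{\mathbb{N}}$, $\mathcal{X}\xrightarrow{R}\mathcal{Y}$ means: there is an integer $k$ such that for each $X\in\mathcal{X}$ there are subcollections $\mathcal{U}_1,\dots,\mathcal{U}_k\subseteq\mathcal{Y}$ of subspaces of $X$, each $\mathcal{U}_i$ being $R_i$-disjoint, with $\bigcup_i\mathcal{U}_i$ covering $X$. A family is bounded if the diameters of its members are uniformly bounded. $\mathfrak{C}_0$ is the class of bounded families; for an ordinal $\alpha>0$, $\mathfrak{C}_\alpha$ is the class of families $\mathcal{X}$ such that for every $R\in\mathbb{R}^{\mathbb{N}}$ there exist $\beta<\alpha$ and $\mathcal{Y}\in\mathfrak{C}_\beta$ with $\mathcal{X}\xrightarrow{R}\mathcal{Y}$. All subspaces carry the induced metric. *)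

theory Defs
  imports Main "HOL.Real_Vector_Spaces"
begin

text \<open>A family of subspaces of a metric space is modelled as a set of subsets of
  a metric-space type; each subspace carries the induced metric.\<close>

definition r_disjoint :: "real \<Rightarrow> ('a::metric_space) set set \<Rightarrow> bool" where
  "r_disjoint r \<U> \<longleftrightarrow>
     (\<forall>U\<in>\<U>. \<forall>U'\<in>\<U>. U \<noteq> U' \<longrightarrow> (\<forall>x\<in>U. \<forall>y\<in>U'. dist x y > r))"

definition bounded_family :: "('a::metric_space) set set \<Rightarrow> bool" where
  "bounded_family \<X> \<longleftrightarrow> (\<exists>B. \<forall>U\<in>\<X>. \<forall>x\<in>U. \<forall>y\<in>U. dist x y \<le> B)"

text \<open>The relation X --R--> Y; the sequence R is indexed R 1, R 2, ...\<close>
definition decomposes :: "(nat \<Rightarrow> real) \<Rightarrow> ('a::metric_space) set set \<Rightarrow> 'a set set \<Rightarrow> bool" where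
  "decomposes R \<X> \<Y> \<longleftrightarrow>
     (\<exists>k::nat. \<forall>X\<in>\<X>. \<exists>\<U>::nat \<Rightarrow> 'a set set.
        (\<forall>i\<in>{1..k}. \<U> i \<subseteq> \<Y> \<and> (\<forall>V\<in>\<U> i. V \<subseteq> X) \<and> r_disjoint (R i) (\<U> i))
        \<and> X \<subseteq> (\<Union>i\<in>{1..k}. \<Union>(\<U> i)))"

text \<open>The classes C_alpha, with ordinals represented by elements of an arbitrary
  well-ordered type. Since the recursion is along a well-order, the inductive
  (least fixed point) definition coincides with the transfinite recursion.\<close>
inductive C_class :: "'o::wellorder \<Rightarrow> ('a::metric_space) set set \<Rightarrow> bool" where
  zero: "(\<forall>\<beta>. \<not> \<beta> < \<alpha>) \<Longrightarrow> bounded_family \<X> \<Longrightarrow> C_class \<alpha> \<X>"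
| succ: "(\<exists>\<beta>. \<beta> < \<alpha>) \<Longrightarrow>
         (\<forall>R. \<exists>\<beta><\<alpha>. \<exists>\<Y>. C_class \<beta> \<Y> \<and> decomposes R \<X> \<Y>) \<Longrightarrow> C_class \<alpha> \<X>"

end

theory Submission
  imports Defs
begin

lemma decomposes_refl: "decomposes R \<X> \<X>"
  unfolding decomposes_def
  apply (rule exI[of _ "1"])
  apply (intro ballI)
  subgoal for X
    apply (rule exI[of _ "\<lambda>_. {X}"])
    by (auto simp: r_disjoint_def)
  done

lemma C_mono_ord:
  assumes "C_class b1 \<Y>" "b1 \<le> b"
  shows "C_class b \<Y>"
  using assms(1)
proof (cases rule: C_class.cases)
  case zero
  show ?thesis
  proof (cases "b = b1")
    case True then show ?thesis using assms by simp
  next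
    case False
    then have "b1 < b" using assms(2) by simp
    then show ?thesis
    proof (intro C_class.succ allI)
      show "\<exists>\<beta>. \<beta> < b" using \<open>b1 < b\<close> by blast
      fix R :: "nat \<Rightarrow> real"
      have "C_class b1 \<Y> \<and> decomposes R \<Y> \<Y>" using assms(1) decomposes_refl by blast
      then show "\<exists>\<beta><b. \<exists>\<Y>'. C_class \<beta> \<Y>' \<and> decomposes R \<Y> \<Y>'" using \<open>b1 < b\<close> by blast
    qed
  qed
next
  case succ
  then show ?thesis using assms(2)
    by (intro C_class.succ) (meson order_less_le_trans)+
qed

definition down :: "'a set set \<Rightarrow> 'a set set" where
  "down \<X> = {A. \<exists>B\<in>\<X>. A \<subseteq> B}"

lemma r_disjoint_image_inter:
  assumes "r_disjoint r \<U>"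
  shows "r_disjoint r ((\<lambda>V. V \<inter> A) ` \<U>)"
  unfolding r_disjoint_def
proof (intro ballI impI)
  fix W W' x y assume W: "W \<in> (\<lambda>V. V \<inter> A) ` \<U>" and W': "W' \<in> (\<lambda>V. V \<inter> A) ` \<U>"
    and ne: "W \<noteq> W'" and x: "x \<in> W" and y: "y \<in> W'"
  obtain V where V: "V \<in> \<U>" "W = V \<inter> A" using W by blast
  obtain V' where V': "V' \<in> \<U>" "W' = V' \<inter> A" using W' by blast
  have "V \<noteq> V'" using ne V V' by blast
  moreover have "x \<in> V" "y \<in> V'" using x y V V' by auto
  ultimately show "dist x y > r" using assms V(1) V'(1) unfolding r_disjoint_def by blast
qed

lemma decomposes_down:
  assumes "decomposes R \<X> \<Y>" "\<forall>A\<in>\<X>'. \<exists>B\<in>\<X>. A \<subseteq> B"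
  shows "decomposes R \<X>' (down \<Y>)"
proof -
  obtain k where k: "\<forall>X\<in>\<X>. \<exists>\<U>::nat \<Rightarrow> 'a set set.
        (\<forall>i\<in>{1..k}. \<U> i \<subseteq> \<Y> \<and> (\<forall>V\<in>\<U> i. V \<subseteq> X) \<and> r_disjoint (R i) (\<U> i))
        \<and> X \<subseteq> (\<Union>i\<in>{1..k}. \<Union>(\<U> i))"
    using assms(1) unfolding decomposes_def by blast
  show ?thesis unfolding decomposes_def
  proof (intro exI[of _ k] ballI)
    fix X' assume "X' \<in> \<X>'"
    then obtain X where X: "X \<in> \<X>" "X' \<subseteq> X" using assms(2) by blast
    then obtain \<U> where U: "\<forall>i\<in>{1..k}. \<U> i \<subseteq> \<Y> \<and> (\<forall>V\<in>\<U> i. V \<subseteq> X) \<and> r_disjoint (R i) (\<U> i)"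
       "X \<subseteq> (\<Union>i\<in>{1..k}. \<Union>(\<U> i))" using bspec[OF k X(1)] by (elim exE conjE) (rule that)
    show "\<exists>\<U>::nat \<Rightarrow> 'a set set.
        (\<forall>i\<in>{1..k}. \<U> i \<subseteq> down \<Y> \<and> (\<forall>V\<in>\<U> i. V \<subseteq> X') \<and> r_disjoint (R i) (\<U> i))
        \<and> X' \<subseteq> (\<Union>i\<in>{1..k}. \<Union>(\<U> i))"
    proof (rule exI[of _ "\<lambda>i. (\<lambda>V. V \<inter> X') ` \<U> i"], rule conjI)
      show "\<forall>i\<in>{1..k}. (\<lambda>V. V \<inter> X') ` \<U> i \<subseteq> down \<Y> \<and> (\<forall>V\<in>(\<lambda>V. V \<inter> X') ` \<U> i. V \<subseteq> X')
          \<and> r_disjoint (R i) ((\<lambda>V. V \<inter> X') ` \<U> i)"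
      proof
        fix i assume i: "i \<in> {1..k}"
        then have Ui: "\<U> i \<subseteq> \<Y>" "r_disjoint (R i) (\<U> i)" using U(1) by auto
        have "(\<lambda>V. V \<inter> X') ` \<U> i \<subseteq> down \<Y>" using Ui(1) unfolding down_def by blast
        moreover have "\<forall>V\<in>(\<lambda>V. V \<inter> X') ` \<U> i. V \<subseteq> X'" by blast
        moreover have "r_disjoint (R i) ((\<lambda>V. V \<inter> X') ` \<U> i)"
          by (rule r_disjoint_image_inter[OF Ui(2)])
        ultimately show "(\<lambda>V. V \<inter> X') ` \<U> i \<subseteq> down \<Y> \<and> (\<forall>V\<in>(\<lambda>V. V \<inter> X') ` \<U> i. V \<subseteq> X')
          \<and> r_disjoint (R i) ((\<lambda>V. V \<inter> X') ` \<U> i)" by blast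
      qed
    next
      show "X' \<subseteq> (\<Union>i\<in>{1..k}. \<Union>((\<lambda>V. V \<inter> X') ` \<U> i))"
        using U(2) X(2) by blast
    qed
  qed
qed

lemma C_down:
  assumes "C_class a \<X>" "\<forall>A\<in>\<X>'. \<exists>B\<in>\<X>. A \<subseteq> B"
  shows "C_class a \<X>'"
  using assms
proof (induction arbitrary: \<X>' rule: C_class.induct)
  case (zero \<alpha> \<X>)
  then show ?case
  proof (intro C_class.zero)
    show "\<forall>\<beta>. \<not> \<beta> < \<alpha>" using zero by blast
    obtain B where "\<forall>U\<in>\<X>. \<forall>x\<in>U. \<forall>y\<in>U. dist x y \<le> B"
      using zero unfolding bounded_family_def by blast
    then show "bounded_family \<X>'" unfolding bounded_family_def
    proof (intro exI[of _ B] ballI)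
      fix A x y assume B: "\<forall>U\<in>\<X>. \<forall>x\<in>U. \<forall>y\<in>U. dist x y \<le> B" and A: "A \<in> \<X>'" and xy: "x \<in> A" "y \<in> A"
      obtain C where "C \<in> \<X>" "A \<subseteq> C" using A zero.prems by blast
      then show "dist x y \<le> B" using B xy by blast
    qed
  qed
next
  case (succ \<alpha> \<X>)
  show ?case
  proof (intro C_class.succ[OF succ.hyps(1)] allI)
    fix R
    obtain b \<Y> where "b < \<alpha>" "C_class b \<Y>" "\<forall>\<X>'. (\<forall>A\<in>\<X>'. \<exists>B\<in>\<Y>. A \<subseteq> B) \<longrightarrow> C_class b \<X>'"
      "decomposes R \<X> \<Y>" using spec[OF succ.IH, of R] by (elim exE conjE) (rule that)
    moreover have "C_class b (down \<Y>)" using calculation(3) unfolding down_def by (rule allE) (erule mp, blast)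
    moreover have "decomposes R \<X>' (down \<Y>)" using decomposes_down calculation(4) succ.prems by blast
    ultimately show "\<exists>\<beta><\<alpha>. \<exists>\<Y>. C_class \<beta> \<Y> \<and> decomposes R \<X>' \<Y>" by (intro exI conjI)
  qed
qed

lemma pad:
  fixes U :: "nat \<Rightarrow> ('a::metric_space) set set"
  assumes "\<forall>i\<in>{1..k1}. U i \<subseteq> Y \<and> (\<forall>V\<in>U i. V \<subseteq> X) \<and> r_disjoint (R i) (U i)"
    "X \<subseteq> (\<Union>i\<in>{1..k1}. \<Union>(U i))" "k1 \<le> k" "Y \<subseteq> Y'"
  shows "\<exists>U'::nat \<Rightarrow> 'a set set. (\<forall>i\<in>{1..k}. U' i \<subseteq> Y' \<and> (\<forall>V\<in>U' i. V \<subseteq> X) \<and> r_disjoint (R i) (U' i))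
     \<and> X \<subseteq> (\<Union>i\<in>{1..k}. \<Union>(U' i))"
proof -
  let ?U = "\<lambda>i. if i \<le> k1 then U i else {}"
  have e: "r_disjoint r {}" for r by (simp add: r_disjoint_def)
  have a: "\<forall>i\<in>{1..k}. ?U i \<subseteq> Y' \<and> (\<forall>V\<in>?U i. V \<subseteq> X) \<and> r_disjoint (R i) (?U i)"
  proof
    fix i assume i: "i \<in> {1..k}"
    show "?U i \<subseteq> Y' \<and> (\<forall>V\<in>?U i. V \<subseteq> X) \<and> r_disjoint (R i) (?U i)"
    proof (cases "i \<le> k1")
      case True
      then have "i \<in> {1..k1}" using i by simp
      then have h: "U i \<subseteq> Y \<and> (\<forall>V\<in>U i. V \<subseteq> X) \<and> r_disjoint (R i) (U i)" by (rule bspec[OF assms(1)])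
      have eq: "?U i = U i" using True by simp
      have "U i \<subseteq> Y'" using h assms(4) by (elim conjE) (rule subset_trans)
      then show ?thesis unfolding eq using h by (elim conjE) (intro conjI)
    next
      case False
      then show ?thesis using e by simp
    qed
  qed
  have "(\<Union>i\<in>{1..k1}. \<Union>(U i)) \<subseteq> (\<Union>i\<in>{1..k}. \<Union>(?U i))"
  proof (rule UN_mono)
    show "{1..k1} \<subseteq> {1..k}" using assms(3) by simp
    fix i assume "i \<in> {1..k1}"
    then show "\<Union>(U i) \<subseteq> \<Union>(?U i)" by simp
  qed
  then have b: "X \<subseteq> (\<Union>i\<in>{1..k}. \<Union>(?U i))" using assms(2) by (rule order_trans[rotated])
  show ?thesis by (rule exI[of _ ?U], rule conjI[OF a b])
qed

lemma decomposes_union: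
  assumes "decomposes R \<X>1 \<Y>1" "decomposes R \<X>2 \<Y>2"
  shows "decomposes R (\<X>1 \<union> \<X>2) (\<Y>1 \<union> \<Y>2)"
proof -
  obtain k1 where k1: "\<forall>X\<in>\<X>1. \<exists>\<U>::nat \<Rightarrow> 'a set set.
        (\<forall>i\<in>{1..k1}. \<U> i \<subseteq> \<Y>1 \<and> (\<forall>V\<in>\<U> i. V \<subseteq> X) \<and> r_disjoint (R i) (\<U> i))
        \<and> X \<subseteq> (\<Union>i\<in>{1..k1}. \<Union>(\<U> i))"
    using assms(1) unfolding decomposes_def by blast
  obtain k2 where k2: "\<forall>X\<in>\<X>2. \<exists>\<U>::nat \<Rightarrow> 'a set set.
        (\<forall>i\<in>{1..k2}. \<U> i \<subseteq> \<Y>2 \<and> (\<forall>V\<in>\<U> i. V \<subseteq> X) \<and> r_disjoint (R i) (\<U> i))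
        \<and> X \<subseteq> (\<Union>i\<in>{1..k2}. \<Union>(\<U> i))"
    using assms(2) unfolding decomposes_def by blast
  have e: "r_disjoint r {}" for r by (simp add: r_disjoint_def)
  show ?thesis unfolding decomposes_def
  proof (intro exI[of _ "max k1 k2"] ballI)
    fix X assume "X \<in> \<X>1 \<union> \<X>2"
    then consider "X \<in> \<X>1" | "X \<in> \<X>2" by blast
    then show "\<exists>\<U>::nat \<Rightarrow> 'a set set.
        (\<forall>i\<in>{1..max k1 k2}. \<U> i \<subseteq> \<Y>1 \<union> \<Y>2 \<and> (\<forall>V\<in>\<U> i. V \<subseteq> X) \<and> r_disjoint (R i) (\<U> i))
        \<and> X \<subseteq> (\<Union>i\<in>{1..max k1 k2}. \<Union>(\<U> i))"
    proof cases
      case 1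
      then obtain \<U> where U: "\<forall>i\<in>{1..k1}. \<U> i \<subseteq> \<Y>1 \<and> (\<forall>V\<in>\<U> i. V \<subseteq> X) \<and> r_disjoint (R i) (\<U> i)"
        "X \<subseteq> (\<Union>i\<in>{1..k1}. \<Union>(\<U> i))" using bspec[OF k1 1] by (elim exE conjE) (rule that)
      show ?thesis
        by (rule pad[OF U]) auto
    next
      case 2
      then obtain \<U> where U: "\<forall>i\<in>{1..k2}. \<U> i \<subseteq> \<Y>2 \<and> (\<forall>V\<in>\<U> i. V \<subseteq> X) \<and> r_disjoint (R i) (\<U> i)"
        "X \<subseteq> (\<Union>i\<in>{1..k2}. \<Union>(\<U> i))" using bspec[OF k2 2] by (elim exE conjE) (rule that)
      show ?thesis
        by (rule pad[OF U]) auto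
    qed
  qed
qed

lemma C_union:
  fixes a :: "'o::wellorder"
  shows "C_class a \<X>1 \<Longrightarrow> C_class a \<X>2 \<Longrightarrow> C_class a (\<X>1 \<union> (\<X>2 :: ('a::metric_space) set set))"
proof (induction a arbitrary: \<X>1 \<X>2 rule: less_induct)
  case (less a)
  show ?case
  proof (cases "\<exists>b. b < a")
    case False
    have bf1: "bounded_family \<X>1" using less.prems(1)
    proof cases
      case zero then show ?thesis by simp
    next
      case succ then show ?thesis using False by blast
    qed
    have bf2: "bounded_family \<X>2" using less.prems(2)
    proof cases
      case zero then show ?thesis by simp
    next
      case succ then show ?thesis using False by blast
    qed
    obtain B1 where B1: "\<forall>U\<in>\<X>1. \<forall>x\<in>U. \<forall>y\<in>U. dist x y \<le> B1"
      using bf1 unfolding bounded_family_def by (elim exE) (rule that)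
    obtain B2 where B2: "\<forall>U\<in>\<X>2. \<forall>x\<in>U. \<forall>y\<in>U. dist x y \<le> B2"
      using bf2 unfolding bounded_family_def by (elim exE) (rule that)
    note B = B1 B2
    have "bounded_family (\<X>1 \<union> \<X>2)" unfolding bounded_family_def
    proof (intro exI[of _ "max B1 B2"] ballI)
      fix U x y assume U: "U \<in> \<X>1 \<union> \<X>2" and xy: "x \<in> U" "y \<in> U"
      from U show "dist x y \<le> max B1 B2"
      proof
        assume "U \<in> \<X>1" then have "dist x y \<le> B1" using B xy by blast
        then show ?thesis by simp
      next
        assume "U \<in> \<X>2" then have "dist x y \<le> B2" using B xy by blast
        then show ?thesis by simp
      qed
    qed
    then show ?thesis using False by (intro C_class.zero) auto
  next
    case True
    have h1: "\<forall>R. \<exists>\<beta><a. \<exists>\<Y>. C_class \<beta> \<Y> \<and> decomposes R \<X>1 \<Y>"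
      using less.prems(1)
    proof cases
      case zero then show ?thesis using True by blast
    next
      case succ then show ?thesis by blast
    qed
    have h2: "\<forall>R. \<exists>\<beta><a. \<exists>\<Y>. C_class \<beta> \<Y> \<and> decomposes R \<X>2 \<Y>"
      using less.prems(2)
    proof cases
      case zero then show ?thesis using True by blast
    next
      case succ then show ?thesis by blast
    qed
    show ?thesis
    proof (intro C_class.succ[OF True] allI)
      fix R
      obtain b1 \<Y>1 where 1: "b1 < a" "C_class b1 \<Y>1" "decomposes R \<X>1 \<Y>1" using spec[OF h1, of R] by (elim exE conjE) (rule that)
      obtain b2 \<Y>2 where 2: "b2 < a" "C_class b2 \<Y>2" "decomposes R \<X>2 \<Y>2" using spec[OF h2, of R] by (elim exE conjE) (rule that)
      have "max b1 b2 < a" using 1 2 by simp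
      moreover have "C_class (max b1 b2) (\<Y>1 \<union> \<Y>2)"
      proof (rule less.IH[OF calculation])
        show "C_class (max b1 b2) \<Y>1" by (rule C_mono_ord[OF 1(2)]) simp
        show "C_class (max b1 b2) \<Y>2" by (rule C_mono_ord[OF 2(2)]) simp
      qed
      moreover have "decomposes R (\<X>1 \<union> \<X>2) (\<Y>1 \<union> \<Y>2)" using decomposes_union 1 2 by blast
      ultimately show "\<exists>\<beta><a. \<exists>\<Y>. C_class \<beta> \<Y> \<and> decomposes R (\<X>1 \<union> \<X>2) \<Y>" by (intro exI conjI)
    qed
  qed
qed

theorem theorem4p1:
  fixes \<alpha> \<beta> :: "'o::wellorder"
    and X :: "('a::metric_space) set"
    and I :: "'i set"
    and Xi :: "'i \<Rightarrow> 'a set"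
    and Y :: "real \<Rightarrow> 'a set"
  assumes beta_succ: "\<forall>\<gamma>. \<gamma> < \<beta> \<longleftrightarrow> \<gamma> \<le> \<alpha>"
    and union: "X = (\<Union>i\<in>I. Xi i)"
    and fam: "C_class \<alpha> (Xi ` I)"
    and Yr: "\<forall>r>0. Y r \<subseteq> X \<and> C_class \<alpha> {Y r} \<and> r_disjoint r ((\<lambda>i. Xi i - Y r) ` I)"
  shows "C_class \<beta> {X}"
proof (intro C_class.succ allI)
  show "\<exists>b. b < \<beta>" using beta_succ by blast
  fix R :: "nat \<Rightarrow> real"
  define r where "r = max (R 1) 1"
  have "r > 0" unfolding r_def by simp
  then have Y: "Y r \<subseteq> X" "C_class \<alpha> {Y r}" "r_disjoint r ((\<lambda>i. Xi i - Y r) ` I)" using Yr by auto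
  define \<Y> where "\<Y> = (\<lambda>i. Xi i - Y r) ` I \<union> {Y r}"
  have "C_class \<alpha> (Xi ` I \<union> {Y r})" using C_union fam Y(2) by blast
  then have CY: "C_class \<alpha> \<Y>" by (rule C_down) (auto simp: \<Y>_def)
  have d1: "r_disjoint (R 1) ((\<lambda>i. Xi i - Y r) ` I)"
  proof -
    have "R 1 \<le> r" unfolding r_def by simp
    then show ?thesis using Y(3) unfolding r_disjoint_def by (meson order_le_less_trans)
  qed
  have "decomposes R {X} \<Y>" unfolding decomposes_def
  proof (intro exI[of _ "2"] ballI)
    fix X' assume "X' \<in> {X}"
    then have X': "X' = X" by simp
    show "\<exists>\<U>::nat \<Rightarrow> 'a set set.
        (\<forall>i\<in>{1..2}. \<U> i \<subseteq> \<Y> \<and> (\<forall>V\<in>\<U> i. V \<subseteq> X') \<and> r_disjoint (R i) (\<U> i))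
        \<and> X' \<subseteq> (\<Union>i\<in>{1..2}. \<Union>(\<U> i))"
    proof -
    let ?U = "\<lambda>i::nat. if i = 1 then (\<lambda>i. Xi i - Y r) ` I else {Y r}"
    have a: "\<forall>i\<in>{1..2}. ?U i \<subseteq> \<Y> \<and> (\<forall>V\<in>?U i. V \<subseteq> X') \<and> r_disjoint (R i) (?U i)"
    proof
      fix i :: nat assume "i \<in> {1..2}"
      then consider "i = 1" | "i = 2" by force
      then show "?U i \<subseteq> \<Y> \<and> (\<forall>V\<in>?U i. V \<subseteq> X') \<and> r_disjoint (R i) (?U i)"
      proof cases
        case 1
        have "?U i = (\<lambda>i. Xi i - Y r) ` I" using 1 by simp
        moreover have "(\<lambda>i. Xi i - Y r) ` I \<subseteq> \<Y>" unfolding \<Y>_def by blast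
        moreover have "\<forall>V\<in>(\<lambda>i. Xi i - Y r) ` I. V \<subseteq> X'" using X' union by blast
        ultimately show ?thesis using d1 1 by simp
      next
        case 2
        have "?U i = {Y r}" using 2 by simp
        moreover have "r_disjoint (R i) {Y r}" by (simp add: r_disjoint_def)
        ultimately show ?thesis using Y(1) X' unfolding \<Y>_def by simp
      qed
    qed
    have h1: "X \<subseteq> \<Union>((\<lambda>i. Xi i - Y r) ` I) \<union> Y r" using union by blast
    have h2: "\<Union>(?U 1) \<union> \<Union>(?U 2) \<subseteq> (\<Union>i\<in>{1..2}. \<Union>(?U i))"
      by (intro Un_least; rule UN_upper) auto
    have h3: "\<Union>(?U 1) \<union> \<Union>(?U 2) = \<Union>((\<lambda>i. Xi i - Y r) ` I) \<union> Y r" by simp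
    have c: "X \<subseteq> \<Union>(?U 1) \<union> \<Union>(?U 2)" unfolding h3 by (rule h1)
    have b: "X' \<subseteq> (\<Union>i\<in>{1..2}. \<Union>(?U i))" unfolding X' by (rule order_trans[OF c h2])
    show ?thesis by (rule exI[of _ ?U], rule conjI[OF a b])
    qed
  qed
  moreover have "\<alpha> < \<beta>" using beta_succ by simp
  ultimately show "\<exists>b<\<beta>. \<exists>\<Y>. C_class b \<Y> \<and> decomposes R {X} \<Y>" using CY by (intro exI conjI)
qed

end
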